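(* Let $S$ be a monoid such that the word $xt_1xyt_2y$ (distinct variables $x,y,t_1,t_2$) is an isoterm for $S$. Then for every $n\ge1$ the word $$(z_1\,t\,p_1\,t\,z_2\,t\,p_2\,t\cdots z_n\,t\,p_n\,t)(z_1q_1z_2q_2\cdots z_nq_n)(p_1r_1p_2r_2\cdots p_nr_n)(t\,q_1\,t\,r_1\,t\,q_2\,t\,r_2\cdots t\,q_n\,t\,r_n)$$ is an isoterm for $S$, where $z_i,p_i,q_i,r_i$ are distinct variables and each displayed occurrence of the letter $t$ denotes a different linear variable (distinct from each other and from all $z_i,p_i,q_i,r_i$).
   Context: Words are elements of the free semigroup over a countably infinite alphabet of variables. A monoid $S$ satisfies an identity $\mathbf u\approx\mathbf v$ if both sides are equal under every evaluation of the variables in $S$. A word $\mathbf w$ is an isoterm for $S$ if $S$ satisfies no identity $\mathbf w\approx\mathbf w'$ with $\mathbf w'\ne\mathbf w$. A variable is linear in a word if it occurs in it exactly once. *)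

theory Defs
  imports Main
begin

text \<open>Variables are natural numbers (a countably infinite alphabet); words are
nonempty lists of variables (elements of the free semigroup).  A monoid S is
a type of class monoid_mult.\<close>

type_synonym word = "nat list"

definition eval_word :: "(nat \<Rightarrow> 'a::monoid_mult) \<Rightarrow> word \<Rightarrow> 'a" where
  "eval_word \<phi> w = prod_list (map \<phi> w)"

definition satisfies :: "'a::monoid_mult itself \<Rightarrow> word \<Rightarrow> word \<Rightarrow> bool" where
  "satisfies S u v \<longleftrightarrow> (\<forall>\<phi> :: nat \<Rightarrow> 'a. eval_word \<phi> u = eval_word \<phi> v)"

definition isoterm :: "'a::monoid_mult itself \<Rightarrow> word \<Rightarrow> bool" where
  "isoterm S w \<longleftrightarrow> (\<forall>w'. w' \<noteq> [] \<and> satisfies S w w' \<longrightarrow> w' = w)"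

text \<open>Encoding of the variables of the word in Lemma 3.8, for i = 1..n:
z_i = 8i, p_i = 8i+1, q_i = 8i+2, r_i = 8i+3 and the four linear t's
attached to index i are 8i+4, 8i+5 (first factor), 8i+6, 8i+7 (last factor).\<close>

definition zv :: "nat \<Rightarrow> nat" where "zv i = 8*i"
definition pv :: "nat \<Rightarrow> nat" where "pv i = 8*i + 1"
definition qv :: "nat \<Rightarrow> nat" where "qv i = 8*i + 2"
definition rv :: "nat \<Rightarrow> nat" where "rv i = 8*i + 3"
definition tv :: "nat \<Rightarrow> nat \<Rightarrow> nat" where "tv i k = 8*i + 4 + k"  \<comment> \<open>k < 4\<close>

definition word_3p8 :: "nat \<Rightarrow> word" where
  "word_3p8 n =
     concat (map (\<lambda>i. [zv i, tv i 0, pv i, tv i 1]) [1..<n+1])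
   @ concat (map (\<lambda>i. [zv i, qv i]) [1..<n+1])
   @ concat (map (\<lambda>i. [pv i, rv i]) [1..<n+1])
   @ concat (map (\<lambda>i. [tv i 2, qv i, tv i 3, rv i]) [1..<n+1])"

text \<open>x t1 x y t2 y with x = 0, y = 1, t1 = 2, t2 = 3.\<close>
definition xtxyty :: word where "xtxyty = [0, 2, 0, 1, 3, 1]"

end

theory Submission
  imports Defs
begin


lemma eval_append: "eval_word \<phi> (u @ w) = eval_word \<phi> u * eval_word \<phi> w"
  by (simp add: eval_word_def)
lemma eval_map: "eval_word \<phi> (map f u) = eval_word (\<phi> \<circ> f) u"
  by (simp add: eval_word_def)
lemma eval_filter: "eval_word \<phi> (filter P u) = eval_word (\<lambda>x. if P x then \<phi> x else 1) u"
  by (induction u) (auto simp: eval_word_def)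
lemma eval_nil: "eval_word \<phi> [] = 1" by (simp add: eval_word_def)

lemma sat_map: "satisfies S u v \<Longrightarrow> satisfies S (map f u) (map f v)"
  unfolding satisfies_def by (simp add: eval_map)
lemma sat_ctx: "satisfies S u v \<Longrightarrow> satisfies S (p @ u @ s) (p @ v @ s)"
  unfolding satisfies_def by (simp add: eval_append)
lemma sat_filter: "satisfies S u v \<Longrightarrow> satisfies S (filter P u) (filter P v)"
  unfolding satisfies_def by (simp add: eval_filter)
lemma sat_sym: "satisfies S u v \<Longrightarrow> satisfies S v u"
  unfolding satisfies_def by simp

lemma iso_factor:
  assumes iso: "isoterm S w0" and w0: "w0 = p @ map f u @ s" and inj: "\<And>c. g (f c) = c"
    and ne: "u \<noteq> []" and sat: "satisfies S u v"
  shows "v = u"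
proof -
  have I: "\<And>w'. w' \<noteq> [] \<Longrightarrow> satisfies S w0 w' \<Longrightarrow> w' = w0"
    using iso unfolding isoterm_def by blast
  show ?thesis
proof (cases "v = []")
  case True
  have s1: "satisfies S w0 (p @ s)"
    using sat_ctx[OF sat_map[OF sat, of f], of p s] True w0 by simp
  have w0ne: "w0 \<noteq> []" using w0 ne by simp
  show ?thesis
  proof (cases "p @ s = []")
    case True
    with s1 have "satisfies S w0 []" by simp
    hence "satisfies S w0 (w0 @ w0)" unfolding satisfies_def by (simp add: eval_append eval_nil)
    hence "w0 @ w0 = w0" by (rule I[rotated]) (simp add: w0ne)
    thus ?thesis using w0ne by simp
  next
    case False
    with s1 I have "p @ s = w0" by simp
    thus ?thesis using w0 ne by simp
  qed
next
  case False
  have "satisfies S w0 (p @ map f v @ s)" using sat_ctx[OF sat_map[OF sat, of f], of p s] w0 by simp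
  moreover have "p @ map f v @ s \<noteq> []" using False by simp
  ultimately have "p @ map f v @ s = w0" using I by simp
  hence "map f v = map f u" using w0 by simp
  hence "map g (map f v) = map g (map f u)" by simp
  thus ?thesis using inj by (simp add: comp_def)
qed
qed

lemma iso6:
  assumes iso: "isoterm S xtxyty" and d: "distinct [x,a,y,b]" and sat: "satisfies S [x,a,x,y,b,y] v"
  shows "v = [x,a,x,y,b,y]"
  apply (rule iso_factor[OF iso _ _ _ sat, where p="[]" and s="[]" and
     f="\<lambda>c. if c = x then 0 else if c = a then 2 else if c = y then 1 else if c = b then 3 else c + 4"
     and g="\<lambda>m. if m = 0 then x else if m = 2 then a else if m = 1 then y else if m = 3 then b else m - 4"])
  using d by (simp_all add: xtxyty_def)

lemma iso3:
  assumes iso: "isoterm S xtxyty" and d: "x \<noteq> a" and sat: "satisfies S [x,a,x] v"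
  shows "v = [x,a,x]"
  apply (rule iso_factor[OF iso _ _ _ sat, where p="[]" and s="[1,3,1]" and
     f="\<lambda>c. if c = x then 0 else if c = a then 2 else c + 4"
     and g="\<lambda>m. if m = 0 then x else if m = 2 then a else m - 4"])
  using d by (simp_all add: xtxyty_def)

lemma iso4a:
  assumes iso: "isoterm S xtxyty" and d: "distinct [x,a,y]" and sat: "satisfies S [x,a,x,y] v"
  shows "v = [x,a,x,y]"
  apply (rule iso_factor[OF iso _ _ _ sat, where p="[]" and s="[3,1]" and
     f="\<lambda>c. if c = x then 0 else if c = a then 2 else if c = y then 1 else c + 4"
     and g="\<lambda>m. if m = 0 then x else if m = 2 then a else if m = 1 then y else m - 4"])
  using d by (simp_all add: xtxyty_def)

lemma iso4b:
  assumes iso: "isoterm S xtxyty" and d: "distinct [a,x,b]" and sat: "satisfies S [a,x,b,x] v"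
  shows "v = [a,x,b,x]"
  apply (rule iso_factor[OF iso _ _ _ sat, where p="[0,2]" and s="[]" and
     f="\<lambda>c. if c = a then 0 else if c = x then 1 else if c = b then 3 else c + 4"
     and g="\<lambda>m. if m = 0 then a else if m = 1 then x else if m = 3 then b else m - 4"])
  using d by (simp_all add: xtxyty_def)

fun markf :: "(nat \<Rightarrow> nat) \<Rightarrow> nat list \<Rightarrow> (nat \<times> nat) list" where
  "markf c [] = []"
| "markf c (a # w) = (a, c a) # markf (c(a := Suc (c a))) w"

definition mark :: "nat list \<Rightarrow> (nat \<times> nat) list" where "mark w = markf (\<lambda>_. 0) w"

lemma markf_fst: "map fst (markf c w) = w" by (induction w arbitrary: c) auto

lemma markf_set: "set (markf c w) = {(a,k). c a \<le> k \<and> k < c a + count_list w a}"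
proof (induction w arbitrary: c)
  case Nil then show ?case by simp
next
  case (Cons b w)
  show ?case
    by (auto simp: Cons.IH split: if_splits)
qed

lemma markf_distinct: "distinct (markf c w)"
  by (induction w arbitrary: c) (auto simp: markf_set)

lemma markf_filter: "(\<forall>a. P a \<longrightarrow> c a = d a) \<Longrightarrow> markf c (filter P w) = filter (P \<circ> fst) (markf d w)"
  by (induction w arbitrary: c d) auto

lemma markf_append: "markf c (u @ w) = markf c u @ markf (\<lambda>a. c a + count_list u a) w"
proof (induction u arbitrary: c)
  case Nil then show ?case by simp
next
  case (Cons b u)
  have eq: "(\<lambda>a. (c(b := Suc (c b))) a + count_list u a) = (\<lambda>a. c a + count_list (b # u) a)"
    by auto
  show ?case by (simp only: append_Cons markf.simps Cons.IH eq)
qed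

lemma markf_distinct_list: "distinct w \<Longrightarrow> \<forall>a\<in>set w. c a = d a \<Longrightarrow> markf c w = map (\<lambda>a. (a, d a)) w"
proof (induction w arbitrary: c)
  case Nil then show ?case by simp
next
  case (Cons a w)
  have "\<forall>b\<in>set w. (c(a := Suc (c a))) b = d b" using Cons.prems by auto
  then have "markf (c(a := Suc (c a))) w = map (\<lambda>a. (a, d a)) w" using Cons.IH Cons.prems by simp
  then show ?case using Cons.prems by simp
qed

fun pos :: "'b list \<Rightarrow> 'b \<Rightarrow> nat" where
  "pos [] x = 0"
| "pos (a # v) x = (if a = x then 0 else Suc (pos v x))"

definition before :: "'b list \<Rightarrow> 'b \<Rightarrow> 'b \<Rightarrow> bool" where
  "before v x y \<longleftrightarrow> x \<in> set v \<and> y \<in> set v \<and> pos v x < pos v y"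

lemma pos_inj: "x \<in> set v \<Longrightarrow> y \<in> set v \<Longrightarrow> pos v x = pos v y \<Longrightarrow> x = y"
  by (induction v) (auto split: if_splits)

lemma before_total: "x \<in> set v \<Longrightarrow> y \<in> set v \<Longrightarrow> x \<noteq> y \<Longrightarrow> \<not> before v x y \<Longrightarrow> before v y x"
  unfolding before_def using pos_inj by (metis linorder_neqE_nat)

lemma before_transp: "transp (before v)"
  unfolding transp_def before_def by auto

lemma before_filter: "P x \<Longrightarrow> P y \<Longrightarrow> before (filter P v) x y \<longleftrightarrow> before v x y"
  unfolding before_def by (induction v) auto

lemma sorted_unique:
  "distinct u \<Longrightarrow> distinct v \<Longrightarrow> set u = set v \<Longrightarrow> sorted_wrt (before v) u \<Longrightarrow> u = v"
proof (induction u arbitrary: v)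
  case Nil then show ?case by simp
next
  case (Cons a u)
  then obtain b v' where v: "v = b # v'" by (cases v) auto
  have ba: "b = a"
  proof (rule ccontr)
    assume "b \<noteq> a"
    have "b \<in> set u" using Cons.prems v \<open>b\<noteq>a\<close> by (metis insert_iff list.set(2) list.set_intros(1))
    hence "before v a b" using Cons.prems(4) by simp
    thus False using v by (simp add: before_def)
  qed
  have "set u = set v'" using Cons.prems v ba by auto
  moreover have "sorted_wrt (before v') u"
  proof (rule sorted_wrt_mono_rel[of _ "before v"])
    show "sorted_wrt (before v) u" using Cons.prems(4) by simp
  next
    fix x y assume "x \<in> set u" "y \<in> set u" "before v x y"
    moreover have "x \<noteq> a" "y \<noteq> a" using Cons.prems(1) \<open>x \<in> set u\<close> \<open>y \<in> set u\<close> by auto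
    ultimately show "before v' x y" using v ba by (auto simp: before_def)
  qed
  ultimately have "u = v'" using Cons.IH Cons.prems v by simp
  then show ?case using v ba by simp
qed

lemma sorted_wrt_chain:
  assumes "transp R" "sorted_wrt R xs" "sorted_wrt R ys" "xs \<noteq> []" "ys \<noteq> []" "R (last xs) (hd ys)"
  shows "sorted_wrt R (xs @ ys)"
proof -
  have a: "x = last xs \<or> R x (last xs)" if "x \<in> set xs" for x
  proof -
    obtain as where as: "xs = as @ [last xs]" using assms(4) by (metis append_butlast_last_id)
    show ?thesis using that assms(2) as by (metis in_set_conv_decomp rotate1.simps(2) set_ConsD set_rotate1 sorted_wrt_append)
  qed
  have b: "y = hd ys \<or> R (hd ys) y" if "y \<in> set ys" for y
  proof -
    obtain bs where bs: "ys = hd ys # bs" using assms(5) by (metis list.collapse)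
    show ?thesis using that assms(3) bs by (metis set_ConsD sorted_wrt.simps(2))
  qed
  have "R x y" if "x \<in> set xs" "y \<in> set ys" for x y
    using a[OF that(1)] b[OF that(2)] assms(1,6) by (metis transpE)
  thus ?thesis using assms(2,3) by (simp add: sorted_wrt_append)
qed

lemma concat_upt_Suc: "concat (map g [1..<Suc m + 1]) = concat (map g [1..<m+1]) @ g (Suc m)"
  by simp

lemma sorted_concat_upt:
  assumes "transp R" "\<forall>i. 1 \<le> i \<and> i \<le> m \<longrightarrow> sorted_wrt R (g i) \<and> g i \<noteq> []"
    "\<forall>i. 1 \<le> i \<and> i < m \<longrightarrow> R (last (g i)) (hd (g (Suc i)))"
  shows "sorted_wrt R (concat (map g [1..<m+1])) \<and> (m \<ge> 1 \<longrightarrow> last (concat (map g [1..<m+1])) = last (g m)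
     \<and> hd (concat (map g [1..<m+1])) = hd (g 1) \<and> concat (map g [1..<m+1]) \<noteq> [])"
  using assms(2,3)
proof (induction m)
  case 0 then show ?case by simp
next
  case (Suc m)
  define X where "X = concat (map g [1..<m+1])"
  have eqc: "concat (map g [1..<Suc m + 1]) = X @ g (Suc m)" unfolding X_def by simp
  have IH: "sorted_wrt R X \<and> (m \<ge> 1 \<longrightarrow> last X = last (g m) \<and> hd X = hd (g 1) \<and> X \<noteq> [])"
    using Suc unfolding X_def by auto
  have gS: "sorted_wrt R (g (Suc m))" "g (Suc m) \<noteq> []" using Suc.prems by auto
  show ?case
  proof (cases "m = 0")
    case True
    then have "X = []" unfolding X_def by simp
    then show ?thesis using gS True unfolding eqc by simp
  next
    case False
    have "R (last (g m)) (hd (g (Suc m)))" using Suc.prems False by auto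
    then have "sorted_wrt R (X @ g (Suc m))"
      using sorted_wrt_chain[OF assms(1), of X "g (Suc m)"] IH gS False by auto
    then show ?thesis using IH gS False unfolding eqc by auto
  qed
qed



lemma zv_inj[simp]: "(zv i = zv j) = (i = j)" unfolding zv_def by presburger
lemma pv_inj[simp]: "(pv i = pv j) = (i = j)" unfolding pv_def by presburger
lemma qv_inj[simp]: "(qv i = qv j) = (i = j)" unfolding qv_def by presburger
lemma rv_inj[simp]: "(rv i = rv j) = (i = j)" unfolding rv_def by presburger
lemma tv_inj[simp]: "k < 4 \<Longrightarrow> l < 4 \<Longrightarrow> (tv i k = tv j l) = (i = j \<and> k = l)" unfolding tv_def by presburger
lemma zv_pv_ne[simp]: "zv i \<noteq> pv j" unfolding zv_def pv_def by presburger
lemma zv_qv_ne[simp]: "zv i \<noteq> qv j" unfolding zv_def qv_def by presburger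
lemma zv_rv_ne[simp]: "zv i \<noteq> rv j" unfolding zv_def rv_def by presburger
lemma zv_tv_ne[simp]: "k < 4 \<Longrightarrow> zv i \<noteq> tv j k" unfolding zv_def tv_def by presburger
lemma tv_zv_ne[simp]: "k < 4 \<Longrightarrow> tv j k \<noteq> zv i" unfolding zv_def tv_def by presburger
lemma zv_div[simp]: "zv i div 8 = i" unfolding zv_def by presburger
lemma pv_zv_ne[simp]: "pv i \<noteq> zv j" unfolding pv_def zv_def by presburger
lemma pv_qv_ne[simp]: "pv i \<noteq> qv j" unfolding pv_def qv_def by presburger
lemma pv_rv_ne[simp]: "pv i \<noteq> rv j" unfolding pv_def rv_def by presburger
lemma pv_tv_ne[simp]: "k < 4 \<Longrightarrow> pv i \<noteq> tv j k" unfolding pv_def tv_def by presburger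
lemma tv_pv_ne[simp]: "k < 4 \<Longrightarrow> tv j k \<noteq> pv i" unfolding pv_def tv_def by presburger
lemma pv_div[simp]: "pv i div 8 = i" unfolding pv_def by presburger
lemma qv_zv_ne[simp]: "qv i \<noteq> zv j" unfolding qv_def zv_def by presburger
lemma qv_pv_ne[simp]: "qv i \<noteq> pv j" unfolding qv_def pv_def by presburger
lemma qv_rv_ne[simp]: "qv i \<noteq> rv j" unfolding qv_def rv_def by presburger
lemma qv_tv_ne[simp]: "k < 4 \<Longrightarrow> qv i \<noteq> tv j k" unfolding qv_def tv_def by presburger
lemma tv_qv_ne[simp]: "k < 4 \<Longrightarrow> tv j k \<noteq> qv i" unfolding qv_def tv_def by presburger
lemma qv_div[simp]: "qv i div 8 = i" unfolding qv_def by presburger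
lemma rv_zv_ne[simp]: "rv i \<noteq> zv j" unfolding rv_def zv_def by presburger
lemma rv_pv_ne[simp]: "rv i \<noteq> pv j" unfolding rv_def pv_def by presburger
lemma rv_qv_ne[simp]: "rv i \<noteq> qv j" unfolding rv_def qv_def by presburger
lemma rv_tv_ne[simp]: "k < 4 \<Longrightarrow> rv i \<noteq> tv j k" unfolding rv_def tv_def by presburger
lemma tv_rv_ne[simp]: "k < 4 \<Longrightarrow> tv j k \<noteq> rv i" unfolding rv_def tv_def by presburger
lemma rv_div[simp]: "rv i div 8 = i" unfolding rv_def by presburger
lemma tv_div[simp]: "k < 4 \<Longrightarrow> tv i k div 8 = i" unfolding tv_def by presburger

definition f1 :: "nat \<Rightarrow> nat list" where "f1 = (\<lambda>i. [zv i, tv i 0, pv i, tv i 1])"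
definition f2 :: "nat \<Rightarrow> nat list" where "f2 = (\<lambda>i. [zv i, qv i])"
definition f3 :: "nat \<Rightarrow> nat list" where "f3 = (\<lambda>i. [pv i, rv i])"
definition f4 :: "nat \<Rightarrow> nat list" where "f4 = (\<lambda>i. [tv i 2, qv i, tv i 3, rv i])"

lemma W_blocks: "word_3p8 n = concat (map f1 [1..<n+1]) @ concat (map f2 [1..<n+1])
   @ concat (map f3 [1..<n+1]) @ concat (map f4 [1..<n+1])"
  unfolding word_3p8_def f1_def f2_def f3_def f4_def by simp

lemma fs_div: "a \<in> set (f1 i) \<Longrightarrow> a div 8 = i" "a \<in> set (f2 i) \<Longrightarrow> a div 8 = i"
  "a \<in> set (f3 i) \<Longrightarrow> a div 8 = i" "a \<in> set (f4 i) \<Longrightarrow> a div 8 = i"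
  unfolding f1_def f2_def f3_def f4_def by auto

lemma filter_concat_sel:
  "(\<forall>j\<in>set xs. \<not> Q j \<longrightarrow> filter P (g j) = []) \<Longrightarrow>
   filter P (concat (map g xs)) = concat (map (\<lambda>j. filter P (g j)) (filter Q xs))"
  by (induction xs) auto

lemma upt_sel1: "1 \<le> i \<Longrightarrow> i \<le> n \<Longrightarrow> filter (\<lambda>j. j = i) [1..<n+1] = [i]"
  by (rule sorted_distinct_set_unique) (auto intro: sorted_wrt_filter simp del: upt_Suc)

lemma upt_sel2: "1 \<le> i \<Longrightarrow> i < k \<Longrightarrow> k \<le> n \<Longrightarrow> filter (\<lambda>j. j = i \<or> j = k) [1..<n+1] = [i,k]"
  by (rule sorted_distinct_set_unique) (auto intro: sorted_wrt_filter simp del: upt_Suc)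

lemma block_empty:
  assumes "\<forall>a. P a \<longrightarrow> a div 8 = i \<or> a div 8 = k" "\<not> (j = i \<or> j = k)"
  shows "filter P (f1 j) = []" "filter P (f2 j) = []" "filter P (f3 j) = []" "filter P (f4 j) = []"
  using assms fs_div by (metis filter_False)+

lemma W_restrict2:
  assumes "\<forall>a. P a \<longrightarrow> a div 8 = i \<or> a div 8 = k" "1 \<le> i" "i < k" "k \<le> n"
  shows "filter P (word_3p8 n) = filter P (f1 i) @ filter P (f1 k) @ filter P (f2 i) @ filter P (f2 k)
     @ filter P (f3 i) @ filter P (f3 k) @ filter P (f4 i) @ filter P (f4 k)"
proof -
  have "filter P (concat (map g [1..<n+1])) = filter P (g i) @ filter P (g k)"
    if "\<forall>j. \<not> (j = i \<or> j = k) \<longrightarrow> filter P (g j) = []" for g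
    using filter_concat_sel[of "[1..<n+1]" "\<lambda>j. j = i \<or> j = k" P g] that upt_sel2[OF assms(2-4)] by simp
  then show ?thesis unfolding W_blocks using block_empty[OF assms(1)] by simp
qed

lemma W_restrict1:
  assumes "\<forall>a. P a \<longrightarrow> a div 8 = i" "1 \<le> i" "i \<le> n"
  shows "filter P (word_3p8 n) = filter P (f1 i) @ filter P (f2 i) @ filter P (f3 i) @ filter P (f4 i)"
proof -
  have a1: "\<forall>a. P a \<longrightarrow> a div 8 = i \<or> a div 8 = i" using assms(1) by simp
  have "filter P (concat (map g [1..<n+1])) = filter P (g i)"
    if "\<forall>j. \<not> (j = i) \<longrightarrow> filter P (g j) = []" for g
    using filter_concat_sel[of "[1..<n+1]" "\<lambda>j. j = i" P g] that upt_sel1[OF assms(2-3)] by simp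
  then show ?thesis unfolding W_blocks using block_empty[OF a1] by simp
qed

lemma count_filter: "P a \<Longrightarrow> count_list (filter P xs) a = count_list xs a"
  by (induction xs) auto
lemma count_filter_if: "count_list (filter P xs) a = (if P a then count_list xs a else 0)"
  by (induction xs) auto
lemma count_distinct: "distinct xs \<Longrightarrow> count_list xs a = (if a \<in> set xs then 1 else 0)"
  by (induction xs) auto

lemma mark_set: "set (mark w) = {(a,k). k < count_list w a}"
  unfolding mark_def by (simp add: markf_set)

lemma mark_filter: "mark (filter P w) = filter (P \<circ> fst) (mark w)"
  unfolding mark_def by (rule markf_filter) simp

lemma before_restr:
  assumes "filter P v = u" "P a" "P b"
  shows "before (mark v) (a,k) (b,l) = before (mark u) (a,k) (b,l)"
proof -
  have "mark u = filter (P \<circ> fst) (mark v)" using assms(1) mark_filter by metis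
  then show ?thesis using assms(2,3) by (simp add: before_filter)
qed

lemma reconstruct:
  assumes cnt: "\<forall>a. count_list v a = count_list W a" and eW: "filter P W = w0"
    and dU: "distinct U" and PU: "\<forall>x\<in>set U. P (fst x)" and sU: "set U = set (mark w0)"
    and sorted: "sorted_wrt (before (mark v)) U"
  shows "filter P v = map fst U"
proof -
  have "U = mark (filter P v)"
  proof (rule sorted_unique)
    show "distinct U" by (rule dU)
    show "distinct (mark (filter P v))" unfolding mark_def by (rule markf_distinct)
    have "\<forall>a. count_list w0 a = (if P a then count_list v a else 0)"
      using eW cnt count_filter_if by metis
    then show "set U = set (mark (filter P v))" using sU by (simp add: mark_set count_filter_if)
    show "sorted_wrt (before (mark (filter P v))) U"
    proof (rule sorted_wrt_mono_rel[OF _ sorted])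
      fix x y assume "x \<in> set U" "y \<in> set U" "before (mark v) x y"
      then show "before (mark (filter P v)) x y" using PU by (simp add: mark_filter before_filter)
    qed
  qed
  then show ?thesis by (simp add: mark_def markf_fst)
qed

lemma distinct_blocks: fixes g :: "nat \<Rightarrow> nat list" shows "(\<forall>i. distinct (g i)) \<Longrightarrow> (\<forall>i. \<forall>a\<in>set (g i). a div 8 = i) \<Longrightarrow> distinct xs
  \<Longrightarrow> distinct (concat (map g xs))"
  by (induction xs) (auto, metis)



definition g1 :: "nat \<Rightarrow> (nat \<times> nat) list" where "g1 = (\<lambda>i. [(zv i,0),(tv i 0,0),(pv i,0),(tv i 1,0)])"
definition g2 :: "nat \<Rightarrow> (nat \<times> nat) list" where "g2 = (\<lambda>i. [(zv i,1),(qv i,0)])"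
definition g3 :: "nat \<Rightarrow> (nat \<times> nat) list" where "g3 = (\<lambda>i. [(pv i,1),(rv i,0)])"
definition g4 :: "nat \<Rightarrow> (nat \<times> nat) list" where "g4 = (\<lambda>i. [(tv i 2,0),(qv i,1),(tv i 3,0),(rv i,1)])"

lemma distinct_B: "distinct (concat (map f1 [1..<n+1]))" "distinct (concat (map f2 [1..<n+1]))"
  "distinct (concat (map f3 [1..<n+1]))" "distinct (concat (map f4 [1..<n+1]))"
  by (rule distinct_blocks; simp add: fs_div f1_def f2_def f3_def f4_def)+

lemma markf_dl: "distinct w \<Longrightarrow> markf c w = map (\<lambda>a. (a, c a)) w"
  using markf_distinct_list by blast

lemma map_concat_cong: "(\<And>i. i \<in> set xs \<Longrightarrow> map h (f i) = g i) \<Longrightarrow> map h (concat (map f xs)) = concat (map g xs)"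
  by (induction xs) auto

lemma mb1: "map (\<lambda>a. (a, 0)) (concat (map f1 xs)) = concat (map g1 xs)"
  by (rule map_concat_cong) (simp add: f1_def g1_def)
lemma mb2: "(\<forall>i\<in>set xs. c (zv i) = 1 \<and> c (qv i) = 0) \<Longrightarrow> map (\<lambda>a. (a, c a)) (concat (map f2 xs)) = concat (map g2 xs)"
  by (rule map_concat_cong) (simp add: f2_def g2_def)
lemma mb3: "(\<forall>i\<in>set xs. c (pv i) = 1 \<and> c (rv i) = 0) \<Longrightarrow> map (\<lambda>a. (a, c a)) (concat (map f3 xs)) = concat (map g3 xs)"
  by (rule map_concat_cong) (simp add: f3_def g3_def)
lemma mb4: "(\<forall>i\<in>set xs. c (tv i 2) = 0 \<and> c (qv i) = 1 \<and> c (tv i 3) = 0 \<and> c (rv i) = 1) \<Longrightarrow> map (\<lambda>a. (a, c a)) (concat (map f4 xs)) = concat (map g4 xs)"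
  by (rule map_concat_cong) (simp add: f4_def g4_def)

lemma mark_W: "mark (word_3p8 n) = concat (map g1 [1..<n+1]) @ concat (map g2 [1..<n+1])
   @ concat (map g3 [1..<n+1]) @ concat (map g4 [1..<n+1])"
proof -
  define B1 where "B1 = concat (map f1 [1..<n+1])"
  define B2 where "B2 = concat (map f2 [1..<n+1])"
  define B3 where "B3 = concat (map f3 [1..<n+1])"
  define B4 where "B4 = concat (map f4 [1..<n+1])"
  have d: "distinct B1" "distinct B2" "distinct B3" "distinct B4" unfolding B1_def B2_def B3_def B4_def
    by (rule distinct_B)+
  have "mark (word_3p8 n) = map (\<lambda>a. (a, 0)) B1 @ map (\<lambda>a. (a, count_list B1 a)) B2
     @ map (\<lambda>a. (a, count_list B1 a + count_list B2 a)) B3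
     @ map (\<lambda>a. (a, count_list B1 a + count_list B2 a + count_list B3 a)) B4"
    unfolding mark_def W_blocks B1_def[symmetric] B2_def[symmetric] B3_def[symmetric] B4_def[symmetric]
    by (simp add: markf_append markf_dl[OF d(1)] markf_dl[OF d(2)]
        markf_dl[OF d(3)] markf_dl[OF d(4)] add.assoc)
  also have "\<dots> = concat (map g1 [1..<n+1]) @ concat (map g2 [1..<n+1])
   @ concat (map g3 [1..<n+1]) @ concat (map g4 [1..<n+1])"
  proof -
    have c: "count_list B1 a = (if a \<in> set B1 then 1 else 0)" "count_list B2 a = (if a \<in> set B2 then 1 else 0)"
       "count_list B3 a = (if a \<in> set B3 then 1 else 0)" for a
      by (simp_all add: count_distinct d)
    have m: "zv i \<in> set B1" "pv i \<in> set B1" "qv i \<in> set B2" "rv i \<in> set B3" if "i \<in> set [1..<n+1]" for i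
      unfolding B1_def B2_def B3_def using that
      by (simp_all add: f1_def f2_def f3_def; blast)+
    have nm: "qv i \<notin> set B1" "rv i \<notin> set B1" "tv i 2 \<notin> set B1" "tv i 3 \<notin> set B1"
      "pv i \<notin> set B2" "rv i \<notin> set B2" "tv i 2 \<notin> set B2" "tv i 3 \<notin> set B2"
      "qv i \<notin> set B3" "tv i 2 \<notin> set B3" "tv i 3 \<notin> set B3" for i
      unfolding B1_def B2_def B3_def by (simp_all add: f1_def f2_def f3_def)
    have e1: "map (\<lambda>a. (a, 0)) B1 = concat (map g1 [1..<n+1])" unfolding B1_def by (rule mb1)
    have e2: "map (\<lambda>a. (a, count_list B1 a)) B2 = concat (map g2 [1..<n+1])"
      unfolding B2_def by (rule mb2) (use m nm in \<open>simp add: c\<close>)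
    have e3: "map (\<lambda>a. (a, count_list B1 a + count_list B2 a)) B3 = concat (map g3 [1..<n+1])"
      unfolding B3_def by (rule mb3) (use m nm in \<open>simp add: c\<close>)
    have e4: "map (\<lambda>a. (a, count_list B1 a + count_list B2 a + count_list B3 a)) B4 = concat (map g4 [1..<n+1])"
      unfolding B4_def by (rule mb4) (use m nm in \<open>simp add: c\<close>)
    show ?thesis by (simp only: e1 e2 e3 e4)
  qed
  finally show ?thesis .
qed

lemma not_in_W_count:
  assumes iso: "isoterm S xtxyty" and sat: "satisfies S W v" and c: "c \<notin> set W"
  shows "count_list v c = 0"
proof (rule ccontr)
  assume ne: "count_list v c \<noteq> 0"
  have I: "\<And>w'. w' \<noteq> [] \<Longrightarrow> satisfies S xtxyty w' \<Longrightarrow> w' = xtxyty"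
    using iso unfolding isoterm_def by blast
  have "satisfies S (filter (\<lambda>x. x = c) W) (filter (\<lambda>x. x = c) v)" by (rule sat_filter[OF sat])
  moreover have "filter (\<lambda>x. x = c) W = []" using c by (auto simp: filter_empty_conv)
  ultimately have s0: "satisfies S [] (filter (\<lambda>x. x = c) v)" by simp
  have "satisfies S xtxyty (xtxyty @ filter (\<lambda>x. x = c) v)"
    using s0 unfolding satisfies_def by (simp add: eval_append eval_nil)
  moreover have rne: "filter (\<lambda>x. x = c) v \<noteq> []" using ne by (auto simp: count_list_0_iff filter_empty_conv)
  ultimately have "xtxyty @ filter (\<lambda>x. x = c) v = xtxyty" by (intro I) auto
  thus False using rne by simp
qed



lemmas fdefs = f1_def f2_def f3_def f4_def

theorem lemma3p8:
  fixes S :: "'a::monoid_mult itself" and n :: nat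
  assumes "isoterm S xtxyty"
    and "n \<ge> 1"
  shows "isoterm S (word_3p8 n)"
  unfolding isoterm_def
proof (intro allI impI)
  fix v assume hv: "v \<noteq> [] \<and> satisfies S (word_3p8 n) v"
  define W where "W = word_3p8 n"
  have iso: "isoterm S xtxyty" by (rule assms(1))
  have sat: "satisfies S W v" using hv W_def by simp
  have satL: "\<And>P. satisfies S (filter P W) (filter P v)" using sat_filter[OF sat] .
  define R where "R = before (mark v)"
  have trR: "transp R" unfolding R_def by (rule before_transp)

  have eF1: "filter (\<lambda>a. a \<in> {zv i, tv i 0}) W = [zv i, tv i 0, zv i]" if "1 \<le> i" "i \<le> n" for i
    unfolding W_def using that by (subst W_restrict1[of _ i]) (simp_all add: fdefs)
  have F1: "filter (\<lambda>a. a \<in> {zv i, tv i 0}) v = [zv i, tv i 0, zv i]" if "1 \<le> i" "i \<le> n" for i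
    using iso3[OF iso _ satL[of "\<lambda>a. a \<in> {zv i, tv i 0}", unfolded eF1[OF that]]] by simp

  have eF2: "filter (\<lambda>a. a \<in> {tv i 0, pv i, tv i 1}) W = [tv i 0, pv i, tv i 1, pv i]" if "1 \<le> i" "i \<le> n" for i
    unfolding W_def using that by (subst W_restrict1[of _ i]) (simp_all add: fdefs)
  have F2: "filter (\<lambda>a. a \<in> {tv i 0, pv i, tv i 1}) v = [tv i 0, pv i, tv i 1, pv i]" if "1 \<le> i" "i \<le> n" for i
    using iso4b[OF iso _ satL[of "\<lambda>a. a \<in> {tv i 0, pv i, tv i 1}", unfolded eF2[OF that]]] by simp

  have eF3: "filter (\<lambda>a. a \<in> {qv i, tv i 2, tv i 3}) W = [qv i, tv i 2, qv i, tv i 3]" if "1 \<le> i" "i \<le> n" for i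
    unfolding W_def using that by (subst W_restrict1[of _ i]) (simp_all add: fdefs)
  have F3: "filter (\<lambda>a. a \<in> {qv i, tv i 2, tv i 3}) v = [qv i, tv i 2, qv i, tv i 3]" if "1 \<le> i" "i \<le> n" for i
    using iso4a[OF iso _ satL[of "\<lambda>a. a \<in> {qv i, tv i 2, tv i 3}", unfolded eF3[OF that]]] by simp

  have eF4: "filter (\<lambda>a. a \<in> {rv i, tv i 3}) W = [rv i, tv i 3, rv i]" if "1 \<le> i" "i \<le> n" for i
    unfolding W_def using that by (subst W_restrict1[of _ i]) (simp_all add: fdefs)
  have F4: "filter (\<lambda>a. a \<in> {rv i, tv i 3}) v = [rv i, tv i 3, rv i]" if "1 \<le> i" "i \<le> n" for i
    using iso3[OF iso _ satL[of "\<lambda>a. a \<in> {rv i, tv i 3}", unfolded eF4[OF that]]] by simp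

  have eF9: "filter (\<lambda>a. a \<in> {zv i, tv i 0, qv i, tv i 2}) W = [zv i, tv i 0, zv i, qv i, tv i 2, qv i]"
    if "1 \<le> i" "i \<le> n" for i
    unfolding W_def using that by (subst W_restrict1[of _ i]) (simp_all add: fdefs)
  have F9: "filter (\<lambda>a. a \<in> {zv i, tv i 0, qv i, tv i 2}) v = [zv i, tv i 0, zv i, qv i, tv i 2, qv i]"
    if "1 \<le> i" "i \<le> n" for i
    using iso6[OF iso _ satL[of "\<lambda>a. a \<in> {zv i, tv i 0, qv i, tv i 2}", unfolded eF9[OF that]]] by simp

  have eF10: "filter (\<lambda>a. a \<in> {pv i, tv i 1, rv i, tv i 3}) W = [pv i, tv i 1, pv i, rv i, tv i 3, rv i]"
    if "1 \<le> i" "i \<le> n" for i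
    unfolding W_def using that by (subst W_restrict1[of _ i]) (simp_all add: fdefs)
  have F10: "filter (\<lambda>a. a \<in> {pv i, tv i 1, rv i, tv i 3}) v = [pv i, tv i 1, pv i, rv i, tv i 3, rv i]"
    if "1 \<le> i" "i \<le> n" for i
    using iso6[OF iso _ satL[of "\<lambda>a. a \<in> {pv i, tv i 1, rv i, tv i 3}", unfolded eF10[OF that]]] by simp

  have eF5: "filter (\<lambda>a. a \<in> {tv i 1, zv (Suc i), tv (Suc i) 0}) W = [tv i 1, zv (Suc i), tv (Suc i) 0, zv (Suc i)]"
    if "1 \<le> i" "i < n" for i
    unfolding W_def using that by (subst W_restrict2[of _ i "Suc i"]) (simp_all add: fdefs)
  have F5: "filter (\<lambda>a. a \<in> {tv i 1, zv (Suc i), tv (Suc i) 0}) v = [tv i 1, zv (Suc i), tv (Suc i) 0, zv (Suc i)]"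
    if "1 \<le> i" "i < n" for i
    using iso4b[OF iso _ satL[of "\<lambda>a. a \<in> {tv i 1, zv (Suc i), tv (Suc i) 0}", unfolded eF5[OF that]]] by simp

  have eF6: "filter (\<lambda>a. a \<in> {rv i, tv i 3, tv (Suc i) 2}) W = [rv i, tv i 3, rv i, tv (Suc i) 2]"
    if "1 \<le> i" "i < n" for i
    unfolding W_def using that by (subst W_restrict2[of _ i "Suc i"]) (simp_all add: fdefs)
  have F6: "filter (\<lambda>a. a \<in> {rv i, tv i 3, tv (Suc i) 2}) v = [rv i, tv i 3, rv i, tv (Suc i) 2]"
    if "1 \<le> i" "i < n" for i
    using iso4a[OF iso _ satL[of "\<lambda>a. a \<in> {rv i, tv i 3, tv (Suc i) 2}", unfolded eF6[OF that]]] by simp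

  have eF7: "filter (\<lambda>a. a \<in> {zv 1, tv n 1}) W = [zv 1, tv n 1, zv 1]"
  proof (cases "n = 1")
    case True then show ?thesis unfolding W_def by (subst W_restrict1[of _ 1]) (simp_all add: fdefs)
  next
    case False then show ?thesis unfolding W_def using assms(2)
      by (subst W_restrict2[of _ 1 n]) (simp_all add: fdefs)
  qed
  have F7: "filter (\<lambda>a. a \<in> {zv 1, tv n 1}) v = [zv 1, tv n 1, zv 1]"
    using iso3[OF iso _ satL[of "\<lambda>a. a \<in> {zv 1, tv n 1}", unfolded eF7]] by simp

  have eF8: "filter (\<lambda>a. a \<in> {rv n, tv 1 2}) W = [rv n, tv 1 2, rv n]"
  proof (cases "n = 1")
    case True then show ?thesis unfolding W_def by (subst W_restrict1[of _ 1]) (simp_all add: fdefs)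
  next
    case False then show ?thesis unfolding W_def using assms(2)
      by (subst W_restrict2[of _ 1 n]) (simp_all add: fdefs)
  qed
  have F8: "filter (\<lambda>a. a \<in> {rv n, tv 1 2}) v = [rv n, tv 1 2, rv n]"
    using iso3[OF iso _ satL[of "\<lambda>a. a \<in> {rv n, tv 1 2}", unfolded eF8]] by simp

  have cnt_of: "\<And>P a. filter P v = filter P W \<Longrightarrow> P a \<Longrightarrow> count_list v a = count_list W a"
    by (metis count_filter)
  have cntv: "\<forall>a. count_list v a = count_list W a"
  proof
    fix a show "count_list v a = count_list W a"
    proof (cases "a \<in> set W")
      case False then show ?thesis using not_in_W_count[OF iso sat] by (simp add: count_list_0_iff)
    next
      case True
      then obtain i where i: "1 \<le> i" "i \<le> n" and a: "a = zv i \<or> a = tv i 0 \<or> a = pv i \<or> a = tv i 1 \<or>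
          a = qv i \<or> a = tv i 2 \<or> a = tv i 3 \<or> a = rv i"
        unfolding W_def W_blocks by (auto simp: fdefs)
      have e1: "filter (\<lambda>a. a \<in> {zv i, tv i 0}) v = filter (\<lambda>a. a \<in> {zv i, tv i 0}) W"
        using F1[OF i] eF1[OF i] by simp
      have e2: "filter (\<lambda>a. a \<in> {tv i 0, pv i, tv i 1}) v = filter (\<lambda>a. a \<in> {tv i 0, pv i, tv i 1}) W"
        using F2[OF i] eF2[OF i] by simp
      have e3: "filter (\<lambda>a. a \<in> {qv i, tv i 2, tv i 3}) v = filter (\<lambda>a. a \<in> {qv i, tv i 2, tv i 3}) W"
        using F3[OF i] eF3[OF i] by simp
      have e4: "filter (\<lambda>a. a \<in> {rv i, tv i 3}) v = filter (\<lambda>a. a \<in> {rv i, tv i 3}) W"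
        using F4[OF i] eF4[OF i] by simp
      show ?thesis using a cnt_of[OF e1] cnt_of[OF e2] cnt_of[OF e3] cnt_of[OF e4] by auto
    qed
  qed
  have inmark: "\<And>P a k w0. filter P W = w0 \<Longrightarrow> P a \<Longrightarrow> k < count_list w0 a \<Longrightarrow> (a,k) \<in> set (mark v)"
    using cntv by (auto simp: mark_set count_filter)

  have R1: "R (zv i,0) (tv i 0,0)" "R (tv i 0,0) (zv i,1)" if "1 \<le> i" "i \<le> n" for i
    unfolding R_def using before_restr[OF F1[OF that]] by (simp_all add: mark_def before_def)
  have R2: "R (tv i 0,0) (pv i,0)" "R (pv i,0) (tv i 1,0)" "R (tv i 1,0) (pv i,1)" if "1 \<le> i" "i \<le> n" for i
    unfolding R_def using before_restr[OF F2[OF that]] by (simp_all add: mark_def before_def)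
  have R3: "R (qv i,0) (tv i 2,0)" "R (tv i 2,0) (qv i,1)" "R (qv i,1) (tv i 3,0)" if "1 \<le> i" "i \<le> n" for i
    unfolding R_def using before_restr[OF F3[OF that]] by (simp_all add: mark_def before_def)
  have R4: "R (rv i,0) (tv i 3,0)" "R (tv i 3,0) (rv i,1)" if "1 \<le> i" "i \<le> n" for i
    unfolding R_def using before_restr[OF F4[OF that]] by (simp_all add: mark_def before_def)
  have R5: "R (tv i 1,0) (zv (Suc i),0)" if "1 \<le> i" "i < n" for i
    unfolding R_def using before_restr[OF F5[OF that]] by (simp_all add: mark_def before_def)
  have R6: "R (rv i,1) (tv (Suc i) 2,0)" if "1 \<le> i" "i < n" for i
    unfolding R_def using before_restr[OF F6[OF that]] by (simp_all add: mark_def before_def)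
  have R7: "R (tv n 1,0) (zv 1,1)"
    unfolding R_def using before_restr[OF F7] by (simp_all add: mark_def before_def)
  have R8: "R (rv n,0) (tv 1 2,0)"
    unfolding R_def using before_restr[OF F8] by (simp_all add: mark_def before_def)
  have R9: "R (zv i,1) (qv i,0)" if "1 \<le> i" "i \<le> n" for i
    unfolding R_def using before_restr[OF F9[OF that]] by (simp_all add: mark_def before_def)
  have R10: "R (pv i,1) (rv i,0)" if "1 \<le> i" "i \<le> n" for i
    unfolding R_def using before_restr[OF F10[OF that]] by (simp_all add: mark_def before_def)

  have C1: "R (qv i,0::nat) (zv (Suc i),1::nat)" if "1 \<le> i" "i < n" for i
  proof (rule ccontr)
    assume nb: "\<not> R (qv i,0::nat) (zv (Suc i),1::nat)"
    have e: "filter (\<lambda>a. a \<in> {zv (Suc i), tv (Suc i) 0, qv i, tv i 2}) W = [zv (Suc i), tv (Suc i) 0, qv i, zv (Suc i), tv i 2, qv i]"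
      unfolding W_def using that by (subst W_restrict2[of _ i "Suc i"]) (simp_all add: fdefs)
    have m1: "(qv i,0::nat) \<in> set (mark v)" "(zv (Suc i),1::nat) \<in> set (mark v)" using inmark[OF e] by simp_all
    have r: "R (zv (Suc i),1::nat) (qv i,0::nat)" unfolding R_def
      using before_total[OF m1(1) m1(2) _ nb[unfolded R_def]] by simp
    have "filter (\<lambda>a. a \<in> {zv (Suc i), tv (Suc i) 0, qv i, tv i 2}) v = map fst [(zv (Suc i),0::nat),(tv (Suc i) 0,0::nat),(zv (Suc i),1::nat),(qv i,0::nat),(tv i 2,0::nat),(qv i,1::nat)]"
    proof (rule reconstruct[OF cntv e])
      show "distinct [(zv (Suc i),0::nat),(tv (Suc i) 0,0::nat),(zv (Suc i),1::nat),(qv i,0::nat),(tv i 2,0::nat),(qv i,1::nat)]" by simp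
      show "\<forall>x\<in>set [(zv (Suc i),0::nat),(tv (Suc i) 0,0::nat),(zv (Suc i),1::nat),(qv i,0::nat),(tv i 2,0::nat),(qv i,1::nat)]. fst x \<in> {zv (Suc i), tv (Suc i) 0, qv i, tv i 2}" by simp
      show "set [(zv (Suc i),0::nat),(tv (Suc i) 0,0::nat),(zv (Suc i),1::nat),(qv i,0::nat),(tv i 2,0::nat),(qv i,1::nat)] = set (mark [zv (Suc i), tv (Suc i) 0, qv i, zv (Suc i), tv i 2, qv i])" by (auto simp: mark_def)
      show "sorted_wrt (before (mark v)) [(zv (Suc i),0::nat),(tv (Suc i) 0,0::nat),(zv (Suc i),1::nat),(qv i,0::nat),(tv i 2,0::nat),(qv i,1::nat)]"
        using R1[of "Suc i"] R3[of i] that r unfolding R_def by (simp only: sorted_wrt2[OF before_transp] sorted_wrt1, simp?)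
    qed
    then have fv: "filter (\<lambda>a. a \<in> {zv (Suc i), tv (Suc i) 0, qv i, tv i 2}) v = [zv (Suc i), tv (Suc i) 0, zv (Suc i), qv i, tv i 2, qv i]" by simp
    have "filter (\<lambda>a. a \<in> {zv (Suc i), tv (Suc i) 0, qv i, tv i 2}) W = [zv (Suc i), tv (Suc i) 0, zv (Suc i), qv i, tv i 2, qv i]"
      using iso6[OF iso _ sat_sym[OF satL[of "\<lambda>a. a \<in> {zv (Suc i), tv (Suc i) 0, qv i, tv i 2}"], unfolded fv]] by simp
    then show False using e by simp
  qed

  have C2: "R (rv i,0::nat) (pv (Suc i),1::nat)" if "1 \<le> i" "i < n" for i
  proof (rule ccontr)
    assume nb: "\<not> R (rv i,0::nat) (pv (Suc i),1::nat)"
    have e: "filter (\<lambda>a. a \<in> {pv (Suc i), tv (Suc i) 1, rv i, tv i 3}) W = [pv (Suc i), tv (Suc i) 1, rv i, pv (Suc i), tv i 3, rv i]"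
      unfolding W_def using that by (subst W_restrict2[of _ i "Suc i"]) (simp_all add: fdefs)
    have m1: "(rv i,0::nat) \<in> set (mark v)" "(pv (Suc i),1::nat) \<in> set (mark v)" using inmark[OF e] by simp_all
    have r: "R (pv (Suc i),1::nat) (rv i,0::nat)" unfolding R_def
      using before_total[OF m1(1) m1(2) _ nb[unfolded R_def]] by simp
    have "filter (\<lambda>a. a \<in> {pv (Suc i), tv (Suc i) 1, rv i, tv i 3}) v = map fst [(pv (Suc i),0::nat),(tv (Suc i) 1,0::nat),(pv (Suc i),1::nat),(rv i,0::nat),(tv i 3,0::nat),(rv i,1::nat)]"
    proof (rule reconstruct[OF cntv e])
      show "distinct [(pv (Suc i),0::nat),(tv (Suc i) 1,0::nat),(pv (Suc i),1::nat),(rv i,0::nat),(tv i 3,0::nat),(rv i,1::nat)]" by simp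
      show "\<forall>x\<in>set [(pv (Suc i),0::nat),(tv (Suc i) 1,0::nat),(pv (Suc i),1::nat),(rv i,0::nat),(tv i 3,0::nat),(rv i,1::nat)]. fst x \<in> {pv (Suc i), tv (Suc i) 1, rv i, tv i 3}" by simp
      show "set [(pv (Suc i),0::nat),(tv (Suc i) 1,0::nat),(pv (Suc i),1::nat),(rv i,0::nat),(tv i 3,0::nat),(rv i,1::nat)] = set (mark [pv (Suc i), tv (Suc i) 1, rv i, pv (Suc i), tv i 3, rv i])" by (auto simp: mark_def)
      show "sorted_wrt (before (mark v)) [(pv (Suc i),0::nat),(tv (Suc i) 1,0::nat),(pv (Suc i),1::nat),(rv i,0::nat),(tv i 3,0::nat),(rv i,1::nat)]"
        using R2[of "Suc i"] R4[of i] that r unfolding R_def by (simp only: sorted_wrt2[OF before_transp] sorted_wrt1, simp?)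
    qed
    then have fv: "filter (\<lambda>a. a \<in> {pv (Suc i), tv (Suc i) 1, rv i, tv i 3}) v = [pv (Suc i), tv (Suc i) 1, pv (Suc i), rv i, tv i 3, rv i]" by simp
    have "filter (\<lambda>a. a \<in> {pv (Suc i), tv (Suc i) 1, rv i, tv i 3}) W = [pv (Suc i), tv (Suc i) 1, pv (Suc i), rv i, tv i 3, rv i]"
      using iso6[OF iso _ sat_sym[OF satL[of "\<lambda>a. a \<in> {pv (Suc i), tv (Suc i) 1, rv i, tv i 3}"], unfolded fv]] by simp
    then show False using e by simp
  qed

  have C3: "R (qv n,0::nat) (pv 1,1::nat)" 
  proof (rule ccontr)
    assume nb: "\<not> R (qv n,0::nat) (pv 1,1::nat)"
    have e: "filter (\<lambda>a. a \<in> {pv 1, tv 1 1, qv n, tv n 2}) W = [pv 1, tv 1 1, qv n, pv 1, tv n 2, qv n]"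
  proof (cases "n = 1")
      case True then show ?thesis unfolding W_def by (subst W_restrict1[of _ 1]) (simp_all add: fdefs)
    next
      case False then show ?thesis unfolding W_def using assms(2)
        by (subst W_restrict2[of _ 1 n]) (simp_all add: fdefs)
    qed
    have m1: "(qv n,0::nat) \<in> set (mark v)" "(pv 1,1::nat) \<in> set (mark v)" using inmark[OF e] by simp_all
    have r: "R (pv 1,1::nat) (qv n,0::nat)" unfolding R_def
      using before_total[OF m1(1) m1(2) _ nb[unfolded R_def]] by simp
    have "filter (\<lambda>a. a \<in> {pv 1, tv 1 1, qv n, tv n 2}) v = map fst [(pv 1,0::nat),(tv 1 1,0::nat),(pv 1,1::nat),(qv n,0::nat),(tv n 2,0::nat),(qv n,1::nat)]"
    proof (rule reconstruct[OF cntv e])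
      show "distinct [(pv 1,0::nat),(tv 1 1,0::nat),(pv 1,1::nat),(qv n,0::nat),(tv n 2,0::nat),(qv n,1::nat)]" by simp
      show "\<forall>x\<in>set [(pv 1,0::nat),(tv 1 1,0::nat),(pv 1,1::nat),(qv n,0::nat),(tv n 2,0::nat),(qv n,1::nat)]. fst x \<in> {pv 1, tv 1 1, qv n, tv n 2}" by simp
      show "set [(pv 1,0::nat),(tv 1 1,0::nat),(pv 1,1::nat),(qv n,0::nat),(tv n 2,0::nat),(qv n,1::nat)] = set (mark [pv 1, tv 1 1, qv n, pv 1, tv n 2, qv n])" by (auto simp: mark_def)
      show "sorted_wrt (before (mark v)) [(pv 1,0::nat),(tv 1 1,0::nat),(pv 1,1::nat),(qv n,0::nat),(tv n 2,0::nat),(qv n,1::nat)]"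
        using R2[of 1] R3[of n] assms(2) r unfolding R_def by (simp only: sorted_wrt2[OF before_transp] sorted_wrt1, simp?)
    qed
    then have fv: "filter (\<lambda>a. a \<in> {pv 1, tv 1 1, qv n, tv n 2}) v = [pv 1, tv 1 1, pv 1, qv n, tv n 2, qv n]" by simp
    have "filter (\<lambda>a. a \<in> {pv 1, tv 1 1, qv n, tv n 2}) W = [pv 1, tv 1 1, pv 1, qv n, tv n 2, qv n]"
      using iso6[OF iso _ sat_sym[OF satL[of "\<lambda>a. a \<in> {pv 1, tv 1 1, qv n, tv n 2}"], unfolded fv]] by simp
    then show False using e by simp
  qed

  have s1: "sorted_wrt R (concat (map g1 [1..<n+1])) \<and> (n \<ge> 1 \<longrightarrow> last (concat (map g1 [1..<n+1])) = last (g1 n)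
     \<and> hd (concat (map g1 [1..<n+1])) = hd (g1 1) \<and> concat (map g1 [1..<n+1]) \<noteq> [])"
    by (rule sorted_concat_upt[OF trR]) (simp_all del: sorted_wrt.simps add: g1_def sorted_wrt2[OF trR] sorted_wrt1 R1 R2 R5 R2[unfolded One_nat_def] R5[unfolded One_nat_def])
  have s2: "sorted_wrt R (concat (map g2 [1..<n+1])) \<and> (n \<ge> 1 \<longrightarrow> last (concat (map g2 [1..<n+1])) = last (g2 n)
     \<and> hd (concat (map g2 [1..<n+1])) = hd (g2 1) \<and> concat (map g2 [1..<n+1]) \<noteq> [])"
    by (rule sorted_concat_upt[OF trR]) (simp_all del: sorted_wrt.simps add: g2_def sorted_wrt2[OF trR] sorted_wrt1 R9[unfolded One_nat_def] C1[unfolded One_nat_def])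
  have s3: "sorted_wrt R (concat (map g3 [1..<n+1])) \<and> (n \<ge> 1 \<longrightarrow> last (concat (map g3 [1..<n+1])) = last (g3 n)
     \<and> hd (concat (map g3 [1..<n+1])) = hd (g3 1) \<and> concat (map g3 [1..<n+1]) \<noteq> [])"
    by (rule sorted_concat_upt[OF trR]) (simp_all del: sorted_wrt.simps add: g3_def sorted_wrt2[OF trR] sorted_wrt1 R10[unfolded One_nat_def] C2[unfolded One_nat_def])
  have s4: "sorted_wrt R (concat (map g4 [1..<n+1])) \<and> (n \<ge> 1 \<longrightarrow> last (concat (map g4 [1..<n+1])) = last (g4 n)
     \<and> hd (concat (map g4 [1..<n+1])) = hd (g4 1) \<and> concat (map g4 [1..<n+1]) \<noteq> [])"
    by (rule sorted_concat_upt[OF trR]) (simp_all del: sorted_wrt.simps add: g4_def sorted_wrt2[OF trR] sorted_wrt1 R3 R4 R6 R3[unfolded One_nat_def] R4[unfolded One_nat_def] R6[unfolded One_nat_def])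
  define M1 where "M1 = concat (map g1 [1..<n+1])"
  define M2 where "M2 = concat (map g2 [1..<n+1])"
  define M3 where "M3 = concat (map g3 [1..<n+1])"
  define M4 where "M4 = concat (map g4 [1..<n+1])"
  have p1: "sorted_wrt R M1" "last M1 = (tv n 1, 0)" "hd M1 = (zv 1, 0)" "M1 \<noteq> []"
    using s1 assms(2) unfolding M1_def by (simp_all add: g1_def)
  have p2: "sorted_wrt R M2" "last M2 = (qv n, 0)" "hd M2 = (zv 1, 1)" "M2 \<noteq> []"
    using s2 assms(2) unfolding M2_def by (simp_all add: g2_def)
  have p3: "sorted_wrt R M3" "last M3 = (rv n, 0)" "hd M3 = (pv 1, 1)" "M3 \<noteq> []"
    using s3 assms(2) unfolding M3_def by (simp_all add: g3_def)
  have p4: "sorted_wrt R M4" "last M4 = (rv n, 1)" "hd M4 = (tv 1 2, 0)" "M4 \<noteq> []"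
    using s4 assms(2) unfolding M4_def by (simp_all add: g4_def)
  have q34: "sorted_wrt R (M3 @ M4)"
    by (rule sorted_wrt_chain[OF trR p3(1) p4(1) p3(4) p4(4)]) (simp add: p3 p4 R8 R8[unfolded One_nat_def])
  have q234: "sorted_wrt R (M2 @ (M3 @ M4))"
    by (rule sorted_wrt_chain[OF trR p2(1) q34 p2(4)]) (use p3(4) in \<open>simp_all add: p2 p3 C3 C3[unfolded One_nat_def]\<close>)
  have q: "sorted_wrt R (M1 @ (M2 @ (M3 @ M4)))"
    by (rule sorted_wrt_chain[OF trR p1(1) q234 p1(4)]) (use p2(4) in \<open>simp_all add: p1 p2 R7 R7[unfolded One_nat_def]\<close>)
  have mW: "mark W = mark v"
  proof (rule sorted_unique)
    show "distinct (mark W)" unfolding mark_def by (rule markf_distinct)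
    show "distinct (mark v)" unfolding mark_def by (rule markf_distinct)
    show "set (mark W) = set (mark v)" using cntv by (simp add: mark_set)
    show "sorted_wrt (before (mark v)) (mark W)"
      using q unfolding R_def W_def mark_W M1_def M2_def M3_def M4_def .
  qed
  have "W = v" using arg_cong[OF mW, of "map fst"] by (simp add: mark_def markf_fst)
  then show "v = word_3p8 n" using W_def by simp
qed


end
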